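(* Let $p\ge 2$ be an integer and let $A\in GL_n(\mathbb{C}(\{z\}))$ be such that the Mahler system $\phi_p(Y)=AY$ is Fuchsian at $0$. Then there exists a unique $F\in GL_n(\mathbb{C}[[z]])$ with $F(0)=I_n$ and $\phi_p(F)^{-1}AF=A(0)$. Moreover $F\in GL_n(\mathbb{C}\{z\})$, and if $A\in GL_n(\mathbb{C}(z))$ then $F\in GL_n(\mathcal{M}(D(0,1)))$.
   Context: $\phi_p$ acts entrywise by $f(z)\mapsto f(z^p)$. $\mathbb{C}\{z\}$ denotes convergent power series at $0$ and $\mathbb{C}(\{z\})$ its fraction field. The system $\phi_p(Y)=AY$ is Fuchsian at $0$ if $A$ is regular at $0$, i.e. its entries are analytic at $0$ and $A(0)\in GL_n(\mathbb{C})$. $\mathcal{M}(D(0,1))$ is the field of meromorphic functions on the open unit disk. *)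

theory Defs
  imports "HOL-Analysis.Analysis" "HOL-Complex_Analysis.Complex_Analysis"
    "HOL-Computational_Algebra.Computational_Algebra"
begin

definition mahler_fps :: "nat \<Rightarrow> complex fps \<Rightarrow> complex fps" where
  "mahler_fps p f = fps_compose f (fps_X ^ p)"

definition mahler_mat :: "nat \<Rightarrow> complex fps ^'n^'m \<Rightarrow> complex fps ^'n^'m" where
  "mahler_mat p M = (\<chi> i j. mahler_fps p (M $ i $ j))"

definition mat_at0 :: "complex fps ^'n^'m \<Rightarrow> complex ^'n^'m" where
  "mat_at0 M = (\<chi> i j. fps_nth (M $ i $ j) 0)"

definition const_mat :: "complex ^'n^'m \<Rightarrow> complex fps ^'n^'m" where
  "const_mat C = (\<chi> i j. fps_const (C $ i $ j))"

definition convergent_fps :: "complex fps \<Rightarrow> bool" where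
  "convergent_fps f \<longleftrightarrow> fps_conv_radius f > 0"

text \<open>Power series that are (expansions of) rational functions, i.e. elements of C(z) \<inter> C[[z]].\<close>
definition rational_fps :: "complex fps \<Rightarrow> bool" where
  "rational_fps f \<longleftrightarrow> (\<exists>P Q :: complex poly. Q \<noteq> 0 \<and> f * fps_of_poly Q = fps_of_poly P)"

end

theory Submission
  imports Defs
begin


definition cm :: "complex fps^'n^'m \<Rightarrow> nat \<Rightarrow> complex^'n^'m" where
  "cm M k = (\<chi> i j. M$i$j $ k)"

definition mk :: "(nat \<Rightarrow> complex^'n^'m) \<Rightarrow> complex fps^'n^'m" where
  "mk c = (\<chi> i j. Abs_fps (\<lambda>k. c k $ i $ j))"

lemma cm_mk [simp]: "cm (mk c) = c"
  by (rule ext) (simp add: cm_def mk_def vec_eq_iff)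

lemma cm_nth: "cm M k $ i $ j = M $ i $ j $ k"
  by (simp add: cm_def)

lemma mat_eq_cmI: "(\<And>m. cm X m = cm Y m) \<Longrightarrow> X = Y"
  by (simp add: cm_def vec_eq_iff fps_eq_iff)

lemma cm_mult: "cm (X ** Y) m = (\<Sum>k\<le>m. cm X k ** cm Y (m-k))"
proof -
  have "cm (X ** Y) m $ i $ j = (\<Sum>k\<le>m. cm X k ** cm Y (m-k)) $ i $ j" for i j
  proof -
    have "cm (X ** Y) m $ i $ j = (\<Sum>l\<in>UNIV. \<Sum>k\<le>m. X$i$l$k * Y$l$j$(m-k))"
      by (simp add: cm_def matrix_matrix_mult_def fps_sum_nth fps_mult_nth atLeast0AtMost)
    also have "\<dots> = (\<Sum>k\<le>m. \<Sum>l\<in>UNIV. X$i$l$k * Y$l$j$(m-k))"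
      by (rule sum.swap)
    also have "\<dots> = (\<Sum>k\<le>m. cm X k ** cm Y (m-k)) $ i $ j"
      by (simp add: cm_def matrix_matrix_mult_def)
    finally show ?thesis .
  qed
  then show ?thesis by (simp add: vec_eq_iff)
qed

lemma fps_compose_X_power_nth:
  assumes "p > 0"
  shows "(f oo fps_X ^ p) $ m = (if p dvd m then f $ (m div p) else (0::complex))"
proof -
  have "(f oo fps_X ^ p) $ m = (\<Sum>i=0..m. if i = m div p \<and> p dvd m then f $ i else 0)"
    unfolding fps_compose_nth power_mult[symmetric]
    by (intro sum.cong refl) (use assms in \<open>auto simp: mult.commute\<close>)
  also have "\<dots> = (if p dvd m then f $ (m div p) else 0)"
    using assms by (auto simp: sum.delta' div_le_dividend)
  finally show ?thesis .
qed

lemma cm_mahler: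
  assumes "p > 0"
  shows "cm (mahler_mat p X) m = (if p dvd m then cm X (m div p) else 0)"
  using assms by (simp add: cm_def mahler_mat_def mahler_fps_def fps_compose_X_power_nth vec_eq_iff)

lemma cm_const_right: "cm (X ** const_mat C) m = cm X m ** C"
  by (simp add: cm_def const_mat_def matrix_matrix_mult_def fps_sum_nth vec_eq_iff)

lemma cm_0: "cm X 0 = mat_at0 X"
  by (simp add: cm_def mat_at0_def)

lemma cm_one: "cm (mat 1) m = (if m = 0 then mat 1 else 0)"
  by (auto simp: cm_def mat_def vec_eq_iff)

lemma mahler_mult:
  assumes "p > 0"
  shows "mahler_mat p (X ** Y) = mahler_mat p X ** mahler_mat p Y"
proof -
  have c0: "(fps_X ^ p :: complex fps) $ 0 = 0" using assms by simp
  show ?thesis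
    by (simp add: mahler_mat_def mahler_fps_def matrix_matrix_mult_def vec_eq_iff
        fps_compose_sum_distrib fps_compose_mult_distrib[OF c0])
qed

lemma mahler_one: "mahler_mat p (mat 1) = mat 1"
  by (auto simp: mahler_mat_def mahler_fps_def mat_def vec_eq_iff)

lemma conv_rev: "(\<Sum>k\<le>(m::nat). f k (m - k)) = (\<Sum>k\<le>m. f (m - k) k)"
  by (rule sum.reindex_bij_witness[where i="\<lambda>k. m-k" and j="\<lambda>k. m-k"]) auto

lemma sum_atMost_split: "(\<Sum>k\<le>(m::nat). g k) = g m + (\<Sum>k<m. g k)"
proof -
  have "{..m} = insert m {..<m}" by auto
  then show ?thesis by simp
qed

lemma cm_mult': "cm (X ** Y) m = cm X 0 ** cm Y m + (\<Sum>k<m. cm X (m-k) ** cm Y k)"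
proof -
  have "cm (X ** Y) m = (\<Sum>k\<le>m. cm X (m-k) ** cm Y k)"
    unfolding cm_mult by (rule conv_rev)
  also have "\<dots> = cm X 0 ** cm Y m + (\<Sum>k<m. cm X (m-k) ** cm Y k)"
    by (subst sum_atMost_split) simp
  finally show ?thesis .
qed

lemma cm_mult'': "cm (X ** Y) m = cm X m ** cm Y 0 + (\<Sum>k<m. cm X k ** cm Y (m-k))"
  unfolding cm_mult by (subst sum_atMost_split) simp

fun rinv_c :: "(nat \<Rightarrow> complex^'n^'n) \<Rightarrow> nat \<Rightarrow> complex^'n^'n" where
  "rinv_c c m = (if m = 0 then mat 1 else - (\<Sum>k<m. c (m-k) ** rinv_c c k))"

declare rinv_c.simps[simp del]

lemma rinv_c_right:
  assumes "cm X 0 = mat 1"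
  shows "X ** mk (rinv_c (cm X)) = mat 1"
proof (rule mat_eq_cmI)
  fix m
  show "cm (X ** mk (rinv_c (cm X))) m = cm (mat 1) m"
  proof (cases "m = 0")
    case True
    then show ?thesis by (simp add: cm_mult' assms cm_one rinv_c.simps)
  next
    case False
    then have "rinv_c (cm X) m = - (\<Sum>k<m. cm X (m-k) ** rinv_c (cm X) k)"
      by (subst rinv_c.simps) simp
    then show ?thesis using False by (simp add: cm_mult' assms cm_one)
  qed
qed

lemma transpose_mat_one: "transpose (mat 1 :: 'a::semiring_1^'n^'n) = mat 1"
  by (simp add: transpose_def mat_def vec_eq_iff)

lemma cm_transpose: "cm (transpose X) m = transpose (cm X m)"
  by (simp add: cm_def transpose_def vec_eq_iff)

lemma invertible_at0:
  fixes X :: "complex fps^'n^'n"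
  assumes "mat_at0 X = mat 1"
  shows "X ** mk (rinv_c (cm X)) = mat 1 \<and> mk (rinv_c (cm X)) ** X = mat 1 \<and> invertible X"
proof -
  define R where "R = mk (rinv_c (cm X))"
  have R: "X ** R = mat 1" unfolding R_def by (rule rinv_c_right) (simp add: cm_0 assms)
  define L where "L = mk (rinv_c (cm (transpose X)))"
  have "transpose X ** L = mat 1" unfolding L_def
    using assms by (intro rinv_c_right) (simp add: cm_transpose cm_0[symmetric] transpose_mat_one)
  then have "transpose (transpose X ** L) = mat 1" by (simp add: transpose_mat_one)
  then have L: "transpose L ** X = mat 1" by (simp add: matrix_transpose_mul)
  have "transpose L = transpose L ** (X ** R)" by (simp add: R)
  also have "\<dots> = R" by (simp add: matrix_mul_assoc L)
  finally have "R ** X = mat 1" using L by simp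
  with R show ?thesis unfolding R_def invertible_def by blast
qed

lemma invertible_inv:
  fixes X :: "'a::comm_ring_1^'n^'n"
  assumes "invertible X"
  shows "X ** matrix_inv X = mat 1 \<and> matrix_inv X ** X = mat 1"
  using assms unfolding invertible_def matrix_inv_def by (rule someI_ex)

lemma mahler_invertible:
  assumes "p > 0" "invertible X"
  shows "invertible (mahler_mat p X)"
proof -
  obtain Y where "X ** Y = mat 1" "Y ** X = mat 1" using assms(2) invertible_def by blast
  then have "mahler_mat p X ** mahler_mat p Y = mat 1" "mahler_mat p Y ** mahler_mat p X = mat 1"
    by (simp_all add: mahler_mult[OF assms(1), symmetric] mahler_one)
  then show ?thesis unfolding invertible_def by blast
qed

lemma eq_equiv:
  fixes F :: "complex fps^'n^'n"
  assumes "p > 0" "invertible F"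
  shows "matrix_inv (mahler_mat p F) ** A ** F = C \<longleftrightarrow> A ** F = mahler_mat p F ** C"
proof -
  define M where "M = mahler_mat p F"
  have M: "M ** matrix_inv M = mat 1" "matrix_inv M ** M = mat 1"
    using invertible_inv[OF mahler_invertible[OF assms]] unfolding M_def by auto
  show ?thesis unfolding M_def[symmetric]
  proof
    assume "matrix_inv M ** A ** F = C"
    then have "M ** (matrix_inv M ** A ** F) = M ** C" by simp
    then show "A ** F = M ** C" by (simp add: matrix_mul_assoc M)
  next
    assume "A ** F = M ** C"
    then have "matrix_inv M ** (A ** F) = matrix_inv M ** (M ** C)" by simp
    then show "matrix_inv M ** A ** F = C" by (simp add: matrix_mul_assoc M)
  qed
qed

fun solc :: "nat \<Rightarrow> (nat \<Rightarrow> complex^'n^'n) \<Rightarrow> nat \<Rightarrow> complex^'n^'n" where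
  "solc p a m = (if m = 0 then mat 1 else matrix_inv (a 0) **
     ((if p dvd m \<and> m div p < m then solc p a (m div p) ** a 0 else 0) - (\<Sum>k<m. a (m-k) ** solc p a k)))"

declare solc.simps[simp del]

lemma matrix_sub_ldistrib: "(X::'a::ring_1^'n^'m) ** (Y - Z) = X ** Y - X ** Z"
  by (simp add: matrix_matrix_mult_def vec_eq_iff sum_subtractf right_diff_distrib)

lemma Em_iff:
  fixes a0 :: "complex^'n^'n"
  assumes "invertible a0"
  shows "a0 ** Fm + S = T \<longleftrightarrow> Fm = matrix_inv a0 ** (T - S)"
proof -
  note I = invertible_inv[OF assms]
  show ?thesis
  proof
    assume "a0 ** Fm + S = T"
    then have "T - S = a0 ** Fm" by (metis add_diff_cancel_right')
    then have "matrix_inv a0 ** (T - S) = (matrix_inv a0 ** a0) ** Fm" by (simp add: matrix_mul_assoc)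
    then show "Fm = matrix_inv a0 ** (T - S)" using I by simp
  next
    assume "Fm = matrix_inv a0 ** (T - S)"
    then have "a0 ** Fm = (a0 ** matrix_inv a0) ** (T - S)" by (simp add: matrix_mul_assoc)
    then show "a0 ** Fm + S = T" using I by simp
  qed
qed

lemma E_coeff:
  fixes A F :: "complex fps^'n^'n"
  assumes "p > 0"
  shows "cm (A ** F) m = cm (mahler_mat p F ** const_mat (mat_at0 A)) m \<longleftrightarrow>
    cm A 0 ** cm F m + (\<Sum>k<m. cm A (m-k) ** cm F k) = (if p dvd m then cm F (m div p) ** cm A 0 else 0)"
  unfolding cm_mult'[of A F] cm_const_right cm_mahler[OF assms] cm_0 by simp

lemma sol_char:
  fixes A F :: "complex fps^'n^'n"
  assumes p: "p \<ge> 2" and inv: "invertible (mat_at0 A)"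
  shows "(mat_at0 F = mat 1 \<and> A ** F = mahler_mat p F ** const_mat (mat_at0 A)) \<longleftrightarrow> F = mk (solc p (cm A))"
proof -
  have inv': "invertible (cm A 0)" using inv by (simp add: cm_0)
  have dv: "m div p < m" if "m > 0" for m using p that by simp
  have Eiff: "cm (A ** F) m = cm (mahler_mat p F ** const_mat (mat_at0 A)) m \<longleftrightarrow>
     cm F m = matrix_inv (cm A 0) ** ((if p dvd m \<and> m div p < m then cm F (m div p) ** cm A 0 else 0)
        - (\<Sum>k<m. cm A (m-k) ** cm F k))" if "m > 0" for m F
    using p dv[OF that] by (subst E_coeff) (auto simp: Em_iff[OF inv'])
  show ?thesis
  proof
    assume H: "mat_at0 F = mat 1 \<and> A ** F = mahler_mat p F ** const_mat (mat_at0 A)"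
    have "cm F m = solc p (cm A) m" for m
    proof (induction m rule: less_induct)
      case (less m)
      show ?case
      proof (cases "m = 0")
        case True
        then show ?thesis using H by (simp add: cm_0 solc.simps)
      next
        case False
        then have m: "m > 0" by simp
        have "cm F m = matrix_inv (cm A 0) ** ((if p dvd m \<and> m div p < m then cm F (m div p) ** cm A 0 else 0)
          - (\<Sum>k<m. cm A (m-k) ** cm F k))"
          using Eiff[OF m, of F] H by simp
        also have "(\<Sum>k<m. cm A (m-k) ** cm F k) = (\<Sum>k<m. cm A (m-k) ** solc p (cm A) k)"
          by (rule sum.cong) (simp_all add: less)
        also have "matrix_inv (cm A 0) ** ((if p dvd m \<and> m div p < m then cm F (m div p) ** cm A 0 else 0)
          - (\<Sum>k<m. cm A (m-k) ** solc p (cm A) k)) = solc p (cm A) m"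
          using m less dv[OF m] by (subst (2) solc.simps) simp
        finally show ?thesis .
      qed
    qed
    then show "F = mk (solc p (cm A))" by (intro mat_eq_cmI) simp
  next
    assume F: "F = mk (solc p (cm A))"
    have "cm (A ** F) m = cm (mahler_mat p F ** const_mat (mat_at0 A)) m" for m
    proof (cases "m = 0")
      case True
      then show ?thesis using p F by (simp add: E_coeff solc.simps)
    next
      case False
      then have m: "m > 0" by simp
      show ?thesis unfolding Eiff[OF m] F cm_mk
        using m by (subst solc.simps) simp
    qed
    then have "A ** F = mahler_mat p F ** const_mat (mat_at0 A)" by (rule mat_eq_cmI)
    moreover have "mat_at0 F = mat 1" using F by (simp add: cm_0[symmetric] solc.simps)
    ultimately show "mat_at0 F = mat 1 \<and> A ** F = mahler_mat p F ** const_mat (mat_at0 A)" by simp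
  qed
qed

definition mnorm :: "complex^'n^'m \<Rightarrow> real" where
  "mnorm X = (\<Sum>i\<in>UNIV. \<Sum>j\<in>UNIV. norm (X$i$j))"

lemma mnorm_ge0: "mnorm X \<ge> 0"
  unfolding mnorm_def by (intro sum_nonneg) auto

lemma mnorm_entry: "norm (X$i$j) \<le> mnorm X"
proof -
  have "norm (X$i$j) \<le> (\<Sum>j\<in>UNIV. norm (X$i$j))"
    by (rule member_le_sum) auto
  also have "\<dots> \<le> mnorm X" unfolding mnorm_def
    by (rule member_le_sum[where f="\<lambda>i. \<Sum>j\<in>UNIV. norm (X$i$j)"]) (auto intro: sum_nonneg)
  finally show ?thesis .
qed

lemma mnorm_0 [simp]: "mnorm 0 = 0"
  by (simp add: mnorm_def)

lemma mnorm_add: "mnorm (X + Y) \<le> mnorm X + mnorm Y"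
  unfolding mnorm_def sum.distrib[symmetric]
  by (intro sum_mono) (simp add: norm_triangle_ineq)

lemma mnorm_uminus [simp]: "mnorm (- X) = mnorm X"
  by (simp add: mnorm_def)

lemma mnorm_diff: "mnorm (X - Y) \<le> mnorm X + mnorm Y"
  using mnorm_add[of X "- Y"] by simp

lemma mnorm_sum: "mnorm (\<Sum>k\<in>S. f k) \<le> (\<Sum>k\<in>S. mnorm (f k))"
proof (induction S rule: infinite_finite_induct)
  case (insert x F)
  then show ?case using mnorm_add[of "f x" "sum f F"] by simp
qed auto

lemma mnorm_mult: "mnorm ((X::complex^'k^'m) ** (Y::complex^'n^'k)) \<le> mnorm X * mnorm Y"
proof -
  have "mnorm (X ** Y) = (\<Sum>i\<in>UNIV. \<Sum>j\<in>UNIV. norm (\<Sum>k\<in>UNIV. X$i$k * Y$k$j))"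
    by (simp add: mnorm_def matrix_matrix_mult_def)
  also have "\<dots> \<le> (\<Sum>i\<in>UNIV. \<Sum>j\<in>UNIV. \<Sum>k\<in>UNIV. norm (X$i$k) * norm (Y$k$j))"
    by (intro sum_mono order.trans[OF norm_sum]) (simp add: norm_mult)
  also have "\<dots> = (\<Sum>i\<in>UNIV. \<Sum>k\<in>UNIV. norm (X$i$k) * (\<Sum>j\<in>UNIV. norm (Y$k$j)))"
    by (rule sum.cong[OF refl], subst sum.swap) (simp add: sum_distrib_left)
  also have "\<dots> \<le> (\<Sum>i\<in>UNIV. \<Sum>k\<in>UNIV. norm (X$i$k) * mnorm Y)"
  proof (intro sum_mono mult_left_mono)
    fix k
    show "(\<Sum>j\<in>UNIV. norm (Y$k$j)) \<le> mnorm Y" unfolding mnorm_def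
      by (rule member_le_sum[where f="\<lambda>i. \<Sum>j\<in>UNIV. norm (Y$i$j)"]) (auto intro: sum_nonneg)
  qed auto
  also have "\<dots> = mnorm X * mnorm Y"
    by (simp add: mnorm_def sum_distrib_right)
  finally show ?thesis .
qed

lemma geom_D: "(D::real) * (\<Sum>k<m. (1+D)^k) = (1+D)^m - 1"
  by (induction m) (simp_all add: algebra_simps)

lemma growth:
  fixes b :: "nat \<Rightarrow> real"
  assumes r: "r \<ge> 1" and D: "D \<ge> 0" and b0: "b 0 \<ge> 0"
    and rec: "\<And>m. m > 0 \<Longrightarrow> b m \<le> D * (\<Sum>k<m. r^(m-k) * b k)"
  shows "b m \<le> b 0 * (r*(1+D))^m"
proof (induction m rule: less_induct)
  case (less m)
  show ?case
  proof (cases "m = 0")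
    case True then show ?thesis by simp
  next
    case False
    then have "b m \<le> D * (\<Sum>k<m. r^(m-k) * b k)" using rec by simp
    also have "\<dots> \<le> D * (\<Sum>k<m. r^(m-k) * (b 0 * (r*(1+D))^k))"
      using less r D by (intro mult_left_mono sum_mono mult_left_mono) auto
    also have "(\<Sum>k<m. r^(m-k) * (b 0 * (r*(1+D))^k)) = (\<Sum>k<m. b 0 * r^m * (1+D)^k)"
    proof (rule sum.cong)
      fix k assume "k \<in> {..<m}"
      then have e: "r^(m-k) * r^k = r^m" by (simp add: power_add[symmetric])
      have "r^(m-k) * (b 0 * (r*(1+D))^k) = b 0 * ((r^(m-k) * r^k) * (1+D)^k)"
        by (simp only: power_mult_distrib mult_ac)
      also have "\<dots> = b 0 * r^m * (1+D)^k" by (simp only: e mult.assoc)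
      finally show "r^(m-k) * (b 0 * (r*(1+D))^k) = b 0 * r^m * (1+D)^k" .
    qed simp
    also have "D * (\<Sum>k<m. b 0 * r^m * (1+D)^k) = b 0 * r^m * (D * (\<Sum>k<m. (1+D)^k))"
      by (simp add: sum_distrib_left algebra_simps)
    also have "\<dots> = b 0 * r^m * ((1+D)^m - 1)" by (simp add: geom_D)
    also have "\<dots> \<le> b 0 * r^m * (1+D)^m"
      using b0 r by (intro mult_left_mono mult_nonneg_nonneg) simp_all
    also have "\<dots> = b 0 * (r*(1+D))^m"
      by (simp add: power_mult_distrib)
    finally show ?thesis .
  qed
qed

lemma conv_bound:
  fixes f :: "complex fps"
  assumes "fps_conv_radius f > 0"
  shows "\<exists>M r. r \<ge> 1 \<and> (\<forall>k. norm (f$k) \<le> M * r^k)"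
proof -
  obtain \<rho> where \<rho>: "0 < ereal \<rho>" "ereal \<rho> < fps_conv_radius f"
    using ereal_dense2[OF assms] by blast
  then have \<rho>0: "\<rho> > 0" by simp
  have "summable (\<lambda>n. norm (f$n * (complex_of_real \<rho>)^n))"
    by (rule norm_summable_fps) (use \<rho> \<rho>0 in simp)
  then have "(\<lambda>n. norm (f$n * (complex_of_real \<rho>)^n)) \<longlonglongrightarrow> 0"
    by (rule summable_LIMSEQ_zero)
  then have "Bseq (\<lambda>n. norm (f$n * (complex_of_real \<rho>)^n))"
    by (intro convergent_imp_Bseq convergentI)
  then obtain K where K: "K > 0" "\<And>n. norm (norm (f$n * (complex_of_real \<rho>)^n)) \<le> K"
    by (auto elim: BseqE)
  define r where "r = max 1 (1/\<rho>)"
  have "norm (f$k) \<le> K * r^k" for k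
  proof -
    have "norm (f$k) * \<rho>^k \<le> K" using K(2)[of k] \<rho>0 by (simp add: norm_mult norm_power)
    then have "norm (f$k) \<le> K / \<rho>^k" using \<rho>0 by (simp add: field_simps)
    also have "\<dots> = K * (1/\<rho>)^k" by (simp add: power_divide)
    also have "\<dots> \<le> K * r^k" unfolding r_def
      using K \<rho>0 by (intro mult_left_mono power_mono) auto
    finally show ?thesis .
  qed
  moreover have "r \<ge> 1" by (simp add: r_def)
  ultimately show ?thesis by blast
qed

lemma bound_conv:
  fixes f :: "complex fps"
  assumes r: "r > 0" and b: "\<And>k. norm (f$k) \<le> M * r^k"
  shows "fps_conv_radius f \<ge> ereal (1/(2*r))"
proof -
  define z where "z = complex_of_real (1/(2*r))"
  have "norm z = \<bar>1/(2*r)\<bar>" unfolding z_def by (rule norm_of_real)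
  then have nz: "norm z = 1/(2*r)" using r by simp
  have "summable (\<lambda>n. f$n * z^n)"
  proof (rule summable_comparison_test)
    show "summable (\<lambda>n. M * (1/2)^n)" by (intro summable_mult summable_geometric) simp
    show "\<exists>N. \<forall>n\<ge>N. norm (f$n * z^n) \<le> M * (1/2)^n"
    proof (intro exI allI impI)
      fix n
      have "norm (f$n * z^n) = norm (f$n) * (1/(2*r))^n" by (simp add: norm_mult norm_power nz)
      also have "\<dots> \<le> M * r^n * (1/(2*r))^n"
        using b r by (intro mult_right_mono) auto
      also have "\<dots> = M * (1/2)^n" using r by (simp add: power_divide power_mult_distrib field_simps)
      finally show "norm (f$n * z^n) \<le> M * (1/2)^n" .
    qed
  qed
  then have "conv_radius (fps_nth f) \<ge> norm z" by (rule conv_radius_geI)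
  then show ?thesis by (simp add: fps_conv_radius_def nz)
qed

lemma finite_bound:
  fixes g :: "'i \<Rightarrow> nat \<Rightarrow> real"
  assumes "finite I" "\<And>i. i \<in> I \<Longrightarrow> \<exists>M r. r \<ge> 1 \<and> (\<forall>k. g i k \<le> M * r^k)"
  shows "\<exists>M r. r \<ge> 1 \<and> (\<forall>k. (\<Sum>i\<in>I. g i k) \<le> M * r^k)"
  using assms
proof (induction I rule: finite_induct)
  case empty
  then show ?case by (intro exI[of _ 0] exI[of _ 1]) simp
next
  case (insert x F)
  obtain M1 r1 where 1: "r1 \<ge> 1" "\<And>k. g x k \<le> M1 * r1^k" using insert.prems by blast
  obtain M2 r2 where 2: "r2 \<ge> 1" "\<And>k. (\<Sum>i\<in>F. g i k) \<le> M2 * r2^k" using insert by blast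
  define R where "R = max r1 r2"
  have "(\<Sum>i\<in>insert x F. g i k) \<le> (\<bar>M1\<bar> + \<bar>M2\<bar>) * R^k" for k
  proof -
    have a: "M1 * r1^k \<le> \<bar>M1\<bar> * R^k"
      using 1 by (intro order.trans[OF abs_ge_self[of "M1 * r1^k"]])
        (auto simp: abs_mult R_def intro!: mult_left_mono power_mono)
    have b: "M2 * r2^k \<le> \<bar>M2\<bar> * R^k"
      using 2 by (intro order.trans[OF abs_ge_self[of "M2 * r2^k"]])
        (auto simp: abs_mult R_def intro!: mult_left_mono power_mono)
    have s: "(\<Sum>i\<in>insert x F. g i k) = g x k + (\<Sum>i\<in>F. g i k)" using insert.hyps by simp
    show ?thesis unfolding s distrib_right using 1(2)[of k] 2(2)[of k] a b by linarith
  qed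
  moreover have "R \<ge> 1" using 1 by (simp add: R_def)
  ultimately show ?case by blast
qed

lemma mat_bound:
  fixes A :: "complex fps^'n^'m"
  assumes "\<forall>i j. convergent_fps (A$i$j)"
  shows "\<exists>M r. r \<ge> 1 \<and> (\<forall>k. mnorm (cm A k) \<le> M * r^k)"
proof -
  define h where "h = (\<lambda>i k. \<Sum>j\<in>UNIV. norm (A$i$j$k))"
  have "\<exists>M r. r \<ge> 1 \<and> (\<forall>k. h i k \<le> M * r^k)" for i
  proof -
    have "\<And>j. j \<in> UNIV \<Longrightarrow> \<exists>M r. r \<ge> 1 \<and> (\<forall>k. norm (A$i$j$k) \<le> M*r^k)"
      using conv_bound assms unfolding convergent_fps_def by blast
    from finite_bound[of UNIV "\<lambda>j k. norm (A$i$j$k)", OF _ this]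
    show ?thesis unfolding h_def by simp
  qed
  from finite_bound[of UNIV h, OF _ this]
  show ?thesis by (simp add: mnorm_def cm_def h_def)
qed

lemma solc_bound:
  fixes A :: "complex fps^'n^'n"
  assumes p: "p \<ge> 2" and r: "r \<ge> 1" and bA: "\<And>k. mnorm (cm A k) \<le> M * r^k"
  shows "\<exists>B K. K \<ge> 1 \<and> (\<forall>m. mnorm (solc p (cm A) m) \<le> B * K^m)"
proof -
  define b where "b m = mnorm (solc p (cm A) m)" for m
  define \<alpha> where "\<alpha> = mnorm (matrix_inv (cm A 0))"
  define \<beta> where "\<beta> = mnorm (cm A 0)"
  have M0: "M \<ge> 0" using bA[of 0] mnorm_ge0[of "cm A 0"] by simp
  have a0: "\<alpha> \<ge> 0" "\<beta> \<ge> 0" by (simp_all add: \<alpha>_def \<beta>_def mnorm_ge0)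
  have b0: "b m \<ge> 0" for m by (simp add: b_def mnorm_ge0)
  have rec: "b m \<le> (\<alpha> * (\<beta> + M)) * (\<Sum>k<m. r^(m-k) * b k)" if m: "m > 0" for m
  proof -
    define T where "T = (if p dvd m \<and> m div p < m then solc p (cm A) (m div p) ** cm A 0 else 0)"
    define S where "S = (\<Sum>k<m. cm A (m-k) ** solc p (cm A) k)"
    define \<Sigma> where "\<Sigma> = (\<Sum>k<m. r^(m-k) * b k)"
    have sol: "solc p (cm A) m = matrix_inv (cm A 0) ** (T - S)"
      using m unfolding T_def S_def by (subst solc.simps) simp
    have dv: "m div p < m" using m p by simp
    have bd: "b (m div p) \<le> \<Sigma>"
    proof -
      have "b (m div p) \<le> r^(m - m div p) * b (m div p)"
        using mult_right_mono[OF one_le_power[OF r] b0[of "m div p"]] by simp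
      also have "\<dots> \<le> \<Sigma>" unfolding \<Sigma>_def
        by (rule member_le_sum[where f="\<lambda>k. r^(m-k) * b k"]) (use dv b0 r in auto)
      finally show ?thesis .
    qed
    have T: "mnorm T \<le> \<beta> * \<Sigma>"
    proof (cases "p dvd m \<and> m div p < m")
      case True
      then have "mnorm T \<le> b (m div p) * \<beta>"
        unfolding T_def b_def \<beta>_def by (simp add: mnorm_mult)
      also have "\<dots> \<le> \<Sigma> * \<beta>" using bd a0 by (intro mult_right_mono) auto
      finally show ?thesis by (simp add: mult.commute)
    next
      case False
      have "\<Sigma> \<ge> 0" unfolding \<Sigma>_def using b0 r by (intro sum_nonneg) auto
      moreover have "T = 0" unfolding T_def using False by (rule if_not_P)
      ultimately show ?thesis using a0 by simp
    qed
    have S: "mnorm S \<le> M * \<Sigma>"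
    proof -
      have "mnorm S \<le> (\<Sum>k<m. mnorm (cm A (m-k) ** solc p (cm A) k))"
        unfolding S_def by (rule mnorm_sum)
      also have "\<dots> \<le> (\<Sum>k<m. M * r^(m-k) * b k)"
      proof (rule sum_mono)
        fix k
        have "mnorm (cm A (m-k) ** solc p (cm A) k) \<le> mnorm (cm A (m-k)) * b k"
          unfolding b_def by (rule mnorm_mult)
        also have "\<dots> \<le> M * r^(m-k) * b k" using bA b0 by (intro mult_right_mono) auto
        finally show "mnorm (cm A (m-k) ** solc p (cm A) k) \<le> M * r^(m-k) * b k" .
      qed
      also have "\<dots> = M * \<Sigma>" unfolding \<Sigma>_def by (simp add: sum_distrib_left mult.assoc)
      finally show ?thesis .
    qed
    have "b m \<le> \<alpha> * mnorm (T - S)" unfolding b_def sol \<alpha>_def by (rule mnorm_mult)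
    also have "\<dots> \<le> \<alpha> * (\<beta> * \<Sigma> + M * \<Sigma>)"
      using T S mnorm_diff[of T S] a0 by (intro mult_left_mono) auto
    also have "\<dots> = (\<alpha> * (\<beta> + M)) * \<Sigma>" by (simp add: algebra_simps)
    finally show ?thesis unfolding \<Sigma>_def .
  qed
  have D: "\<alpha> * (\<beta> + M) \<ge> 0" using a0 M0 by simp
  have "b m \<le> b 0 * (r * (1 + \<alpha> * (\<beta> + M)))^m" for m
    by (rule growth[OF r D b0 rec])
  moreover have "r * (1 + \<alpha> * (\<beta> + M)) \<ge> 1"
    using r D mult_nonneg_nonneg[of r "\<alpha> * (\<beta> + M)"] by (simp add: algebra_simps)
  ultimately show ?thesis unfolding b_def by blast
qed

lemma rinv_bound:
  assumes r: "r \<ge> 1" and bA: "\<And>k. mnorm (c k) \<le> M * r^k"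
  shows "\<exists>B K. K \<ge> 1 \<and> (\<forall>m. mnorm (rinv_c c m) \<le> B * K^m)"
proof -
  define b where "b m = mnorm (rinv_c c m)" for m
  have M0: "M \<ge> 0" using bA[of 0] mnorm_ge0[of "c 0"] by simp
  have b0: "b m \<ge> 0" for m by (simp add: b_def mnorm_ge0)
  have rec: "b m \<le> M * (\<Sum>k<m. r^(m-k) * b k)" if m: "m > 0" for m
  proof -
    have "b m = mnorm (\<Sum>k<m. c (m-k) ** rinv_c c k)"
      using m unfolding b_def by (subst rinv_c.simps) simp
    also have "\<dots> \<le> (\<Sum>k<m. mnorm (c (m-k) ** rinv_c c k))" by (rule mnorm_sum)
    also have "\<dots> \<le> (\<Sum>k<m. M * r^(m-k) * b k)"
    proof (rule sum_mono)
      fix k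
      have "mnorm (c (m-k) ** rinv_c c k) \<le> mnorm (c (m-k)) * b k"
        unfolding b_def by (rule mnorm_mult)
      also have "\<dots> \<le> M * r^(m-k) * b k" using bA b0 by (intro mult_right_mono) auto
      finally show "mnorm (c (m-k) ** rinv_c c k) \<le> M * r^(m-k) * b k" .
    qed
    also have "\<dots> = M * (\<Sum>k<m. r^(m-k) * b k)" by (simp add: sum_distrib_left mult.assoc)
    finally show ?thesis .
  qed
  have "b m \<le> b 0 * (r * (1 + M))^m" for m
    by (rule growth[OF r M0 b0 rec])
  moreover have "r * (1 + M) \<ge> 1"
    unfolding distrib_left mult_1_right using r mult_nonneg_nonneg[of r M] M0 by linarith
  ultimately show ?thesis unfolding b_def by blast
qed

definition mbounded :: "complex fps^'n^'m \<Rightarrow> bool" where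
  "mbounded X \<longleftrightarrow> (\<exists>B K. K \<ge> 1 \<and> (\<forall>m. mnorm (cm X m) \<le> B * K^m))"

lemma mbounded_radius:
  fixes X :: "complex fps^'n^'m"
  assumes "K \<ge> 1" "\<And>m. mnorm (cm X m) \<le> B * K^m"
  shows "fps_conv_radius (X$i$j) \<ge> ereal (1/(2*K))"
proof (rule bound_conv)
  show "K > 0" using assms by simp
  fix k
  show "norm (X$i$j$k) \<le> B * K^k"
    using mnorm_entry[of "cm X k" i j] assms(2)[of k] by (simp add: cm_nth)
qed

lemma mbounded_convergent:
  fixes X :: "complex fps^'n^'m"
  assumes "mbounded X"
  shows "convergent_fps (X$i$j)"
proof -
  obtain B K where "K \<ge> 1" "\<And>m. mnorm (cm X m) \<le> B * K^m" using assms mbounded_def by blast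
  from mbounded_radius[OF this, of i j] \<open>K \<ge> 1\<close> show ?thesis
    unfolding convergent_fps_def by (meson ereal_less(2) le_less_trans less_le_not_le divide_pos_pos
        mult_pos_pos zero_less_numeral zero_less_one less_le_trans order.strict_trans2 not_le)
qed

lemma convergent_mbounded:
  fixes X :: "complex fps^'n^'m"
  assumes "\<forall>i j. convergent_fps (X$i$j)"
  shows "mbounded X"
  using mat_bound[OF assms] unfolding mbounded_def by blast

lemma eval_fps_sum':
  fixes f :: "'i \<Rightarrow> complex fps"
  assumes "finite S" "\<And>i. i \<in> S \<Longrightarrow> norm z < fps_conv_radius (f i)"
  shows "eval_fps (\<Sum>i\<in>S. f i) z = (\<Sum>i\<in>S. eval_fps (f i) z) \<and> norm z < fps_conv_radius (\<Sum>i\<in>S. f i)"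
  using assms
proof (induction S rule: finite_induct)
  case empty
  then show ?case by simp
next
  case (insert x F)
  then have IH: "eval_fps (\<Sum>i\<in>F. f i) z = (\<Sum>i\<in>F. eval_fps (f i) z)"
    "norm z < fps_conv_radius (\<Sum>i\<in>F. f i)" by auto
  have fx: "norm z < fps_conv_radius (f x)" using insert by auto
  have "eval_fps (f x + (\<Sum>i\<in>F. f i)) z = eval_fps (f x) z + eval_fps (\<Sum>i\<in>F. f i) z"
    by (rule eval_fps_add[OF fx IH(2)])
  moreover have "norm z < fps_conv_radius (f x + (\<Sum>i\<in>F. f i))"
    using fps_conv_radius_add[of "f x" "\<Sum>i\<in>F. f i"] fx IH(2)
    by (meson min_less_iff_conj order.strict_trans2)
  ultimately show ?case using insert IH by simp
qed

lemma eval_fps_mult':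
  fixes f g :: "complex fps"
  assumes "norm z < fps_conv_radius f" "norm z < fps_conv_radius g"
  shows "eval_fps (f * g) z = eval_fps f z * eval_fps g z \<and> norm z < fps_conv_radius (f * g)"
  using eval_fps_mult[OF assms] fps_conv_radius_mult[of f g] assms
  by (meson min_less_iff_conj order.strict_trans2)

lemma eval_mahler:
  fixes f :: "complex fps"
  assumes p: "p > 0" and r: "norm (z^p) < fps_conv_radius f"
  shows "eval_fps (f oo fps_X ^ p) z = eval_fps f (z^p)"
proof -
  define g where "g n = (f oo fps_X ^ p) $ n * z^n" for n
  have sm: "strict_mono (\<lambda>k::nat. p * k)" using p by (intro strict_monoI) simp
  have "(\<lambda>k. g (p * k)) = (\<lambda>k. f $ k * (z^p)^k)"
    using p by (simp add: g_def fps_compose_X_power_nth power_mult)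
  moreover have "(\<lambda>k. f $ k * (z^p)^k) sums eval_fps f (z^p)" by (rule sums_eval_fps[OF r])
  ultimately have "(\<lambda>k. g (p * k)) sums eval_fps f (z^p)" by simp
  moreover have "g n = 0" if "n \<notin> range (\<lambda>k. p * k)" for n
  proof -
    have "\<not> p dvd n" using that by auto
    then show ?thesis using p by (simp add: g_def fps_compose_X_power_nth)
  qed
  ultimately have "g sums eval_fps f (z^p)" using sums_mono_reindex[OF sm] by blast
  then show ?thesis unfolding eval_fps_def g_def by (rule sums_unique[symmetric])
qed

lemma mbounded_mahler:
  assumes p: "p > 0" and b: "mbounded F"
  shows "mbounded (mahler_mat p F)"
proof -
  obtain B K where BK: "K \<ge> 1" "\<And>m. mnorm (cm F m) \<le> B * K^m" using b mbounded_def by blast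
  have "mnorm (cm (mahler_mat p F) m) \<le> \<bar>B\<bar> * K^m" for m
  proof (cases "p dvd m")
    case True
    have "mnorm (cm F (m div p)) \<le> B * K^(m div p)" by (rule BK(2))
    also have "\<dots> \<le> \<bar>B\<bar> * K^(m div p)" using BK(1) by (intro mult_right_mono) auto
    also have "\<dots> \<le> \<bar>B\<bar> * K^m" using BK(1) by (intro mult_left_mono power_increasing) auto
    finally show ?thesis using True p by (simp add: cm_mahler)
  next
    case False
    then show ?thesis using p BK(1) by (simp add: cm_mahler)
  qed
  then show ?thesis unfolding mbounded_def using BK(1) by blast
qed

lemma sign_cases: "of_int (sign q) = (if evenperm q then 1 else - (1::'a::ring_1))"
  by (simp add: sign_def)

lemma det_hom:
  fixes h :: "'a::comm_ring_1 \<Rightarrow> 'b::comm_ring_1"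
  assumes add: "\<And>x y. h (x + y) = h x + h y" and mult: "\<And>x y. h (x * y) = h x * h y"
    and one: "h 1 = 1" and zero: "h 0 = 0" and neg: "\<And>x. h (- x) = - h x"
  shows "h (det M) = det (\<chi> i j. h (M$i$j))"
proof -
  have hsum: "h (sum f S) = (\<Sum>x\<in>S. h (f x))" for f :: "_ \<Rightarrow> 'a" and S
    by (induction S rule: infinite_finite_induct) (simp_all add: add zero)
  have hprod: "h (prod f S) = (\<Prod>x\<in>S. h (f x))" for f :: "_ \<Rightarrow> 'a" and S
    by (induction S rule: infinite_finite_induct) (simp_all add: mult one)
  have hsign: "h (of_int (sign q)) = of_int (sign q)" for q :: "'n \<Rightarrow> 'n"
    by (simp add: sign_cases one neg)
  show ?thesis unfolding det_def hsum mult hprod hsign by simp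
qed

lemma merom_det:
  fixes M :: "complex \<Rightarrow> complex^'n^'n"
  assumes "\<And>i j. (\<lambda>z. M z $ i $ j) meromorphic_on S"
  shows "(\<lambda>z. det (M z)) meromorphic_on S"
  unfolding det_def by (intro meromorphic_intros assms)

definition cinv :: "complex^'n^'n \<Rightarrow> complex^'n^'n" where
  "cinv X = (\<chi> k j. det (\<chi> i l. if l = k then (mat 1 :: complex^'n^'n) $ i $ j else X $ i $ l) / det X)"

lemma cinv:
  fixes X :: "complex^'n^'n"
  assumes "det X \<noteq> 0"
  shows "X ** cinv X = mat 1 \<and> cinv X ** X = mat 1"
proof -
  have col: "X *v (\<chi> k. cinv X $ k $ j) = (\<chi> i. (mat 1 :: complex^'n^'n) $ i $ j)" for j
  proof -
    define b where "b = (\<chi> i. (mat 1 :: complex^'n^'n) $ i $ j)"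
    have "(\<chi> k. cinv X $ k $ j) = (\<chi> k. det(\<chi> i l. if l = k then b$i else X$i$l) / det X)"
      unfolding b_def cinv_def by (intro iffD2[OF vec_eq_iff] allI) (simp cong: if_cong)
    then show ?thesis using cramer[OF assms] unfolding b_def by blast
  qed
  have "X ** cinv X = mat 1"
  proof -
    have "(X ** cinv X) $ i $ j = (mat 1 :: complex^'n^'n) $ i $ j" for i j
      using arg_cong[OF col[of j], of "\<lambda>v. v $ i"]
      by (simp add: matrix_matrix_mult_def matrix_vector_mult_def)
    then show ?thesis by (simp add: vec_eq_iff)
  qed
  then show ?thesis using matrix_left_right_inverse by blast
qed

lemma merom_cinv:
  fixes X :: "complex \<Rightarrow> complex^'n^'n"
  assumes "\<And>i j. (\<lambda>z. X z $ i $ j) meromorphic_on S"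
  shows "(\<lambda>z. cinv (X z) $ k $ j) meromorphic_on S"
  unfolding cinv_def vec_lambda_beta
proof (intro meromorphic_intros merom_det)
  fix i l
  show "(\<lambda>w. (\<chi> i l. if l = k then (mat 1 :: complex^'n^'n) $ i $ j else X w $ i $ l) $ i $ l) meromorphic_on S"
    by (cases "l = k") (auto simp: assms intro: meromorphic_on_const)
qed (rule assms)

lemma det_scale_entries:
  fixes A :: "'a::comm_ring_1^'n^'n"
  shows "det (\<chi> i j. A$i$j * d) = d ^ CARD('n) * det A"
proof -
  have "(\<chi> i j. A$i$j * d) = (\<chi> i. d *s A$i)" by (simp add: vec_eq_iff mult.commute)
  then have "det (\<chi> i j. A$i$j * d) = prod (\<lambda>i. d) (UNIV::'n set) * det (\<chi> i. A$i)"
    using det_rows_mul[of "\<lambda>i. d" "\<lambda>i. A$i"] by simp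
  then show ?thesis by simp
qed

lemma invertible_det_ne0:
  fixes A :: "'a::{comm_ring_1}^'n^'n"
  assumes "invertible A" "(1::'a) \<noteq> 0"
  shows "det A \<noteq> 0"
proof -
  obtain B where "A ** B = mat 1" using assms invertible_def by blast
  then have "det A * det B = 1" using det_mul[of A B] by simp
  then show ?thesis using assms(2) by auto
qed

lemma rat_data:
  fixes A :: "complex fps^'n^'n"
  assumes invA: "invertible A" and rat: "\<forall>i j. rational_fps (A$i$j)"
  shows "\<exists>P Q Zp. Zp \<noteq> 0 \<and> (\<forall>i j. A$i$j * fps_of_poly (Q i j) = fps_of_poly (P i j)) \<and>
     (\<forall>z. poly Zp z \<noteq> 0 \<longrightarrow> (\<forall>i j. poly (Q i j) z \<noteq> 0) \<and>
          det (\<chi> i j. poly (P i j) z / poly (Q i j) z) \<noteq> 0)"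
proof -
  have "\<forall>ij. \<exists>PQ. snd PQ \<noteq> 0 \<and> A$fst ij$snd ij * fps_of_poly (snd PQ) = fps_of_poly (fst PQ)"
    using rat unfolding rational_fps_def by auto
  then obtain PQ where PQ: "\<And>ij. snd (PQ ij) \<noteq> 0 \<and> A$fst ij$snd ij * fps_of_poly (snd (PQ ij)) = fps_of_poly (fst (PQ ij))"
    by metis
  define P where "P i j = fst (PQ (i,j))" for i j
  define Q where "Q i j = snd (PQ (i,j))" for i j
  have Q0: "Q i j \<noteq> 0" for i j using PQ[of "(i,j)"] by (simp add: Q_def)
  have PQe: "A$i$j * fps_of_poly (Q i j) = fps_of_poly (P i j)" for i j
    using PQ[of "(i,j)"] by (simp add: Q_def P_def)
  define Dp where "Dp = (\<Prod>ij\<in>UNIV. Q (fst ij) (snd ij))"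
  define Oth where "Oth i j = (\<Prod>kl\<in>UNIV - {(i,j)}. Q (fst kl) (snd kl))" for i j
  define Rp where "Rp i j = P i j * Oth i j" for i j
  define detR where "detR = det (\<chi> i j. Rp i j)"
  define Zp where "Zp = Dp * detR"
  have Dsplit: "Dp = Q i j * Oth i j" for i j
    unfolding Dp_def Oth_def by (subst prod.remove[of UNIV "(i,j)"]) auto
  have Dp0: "Dp \<noteq> 0" unfolding Dp_def using Q0 by (simp add: prod_zero_iff)
  have fhom: "fps_of_poly (det M) = det (\<chi> i j. fps_of_poly (M$i$j))" for M :: "complex poly^'n^'n"
    by (rule det_hom) (simp_all add: fps_of_poly_add fps_of_poly_mult fps_of_poly_uminus)
  have phom: "poly (det M) z = det (\<chi> i j. poly (M$i$j) z)" for M :: "complex poly^'n^'n" and z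
    by (rule det_hom[where h="\<lambda>q. poly q z"]) simp_all
  have fR: "fps_of_poly (Rp i j) = A$i$j * fps_of_poly Dp" for i j
    unfolding Rp_def fps_of_poly_mult Dsplit[of i j] PQe[symmetric] by (simp add: mult.assoc)
  have "fps_of_poly detR = det (\<chi> i j. A$i$j * fps_of_poly Dp)"
    unfolding detR_def fhom by (simp add: fR)
  also have "\<dots> = fps_of_poly Dp ^ CARD('n) * det A" by (rule det_scale_entries)
  finally have fdetR: "fps_of_poly detR = fps_of_poly Dp ^ CARD('n) * det A" .
  have detA: "det A \<noteq> 0" using invertible_det_ne0[OF invA] by simp
  have fD: "fps_of_poly Dp \<noteq> 0" using Dp0 by simp
  have "fps_of_poly Zp \<noteq> 0" unfolding Zp_def fps_of_poly_mult fdetR using fD detA by simp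
  then have Zp0: "Zp \<noteq> 0" by auto
  have pt: "(\<forall>i j. poly (Q i j) z \<noteq> 0) \<and> det (\<chi> i j. poly (P i j) z / poly (Q i j) z) \<noteq> 0"
    if z: "poly Zp z \<noteq> 0" for z
  proof -
    have pD: "poly Dp z \<noteq> 0" and pR: "poly detR z \<noteq> 0" using z by (auto simp: Zp_def)
    have pQ: "poly (Q i j) z \<noteq> 0" and pO: "poly (Oth i j) z \<noteq> 0" for i j
      using pD unfolding Dsplit[of i j] by auto
    have e: "poly (P i j) z / poly (Q i j) z = poly (Rp i j) z * (1 / poly Dp z)" for i j
      using pQ[of i j] pO[of i j] unfolding Rp_def Dsplit[of i j] by (simp add: field_simps)
    have "det (\<chi> i j. poly (P i j) z / poly (Q i j) z) = det (\<chi> i j. poly (Rp i j) z * (1 / poly Dp z))"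
      by (simp add: e)
    also have "\<dots> = (1 / poly Dp z) ^ CARD('n) * det (\<chi> i j. poly (Rp i j) z)"
      using det_scale_entries[of "\<chi> i j. poly (Rp i j) z" "1 / poly Dp z"] by simp
    also have "det (\<chi> i j. poly (Rp i j) z) = poly detR z"
      unfolding detR_def phom by simp
    finally have "det (\<chi> i j. poly (P i j) z / poly (Q i j) z) = (1 / poly Dp z) ^ CARD('n) * poly detR z" .
    then show ?thesis using pD pR pQ by simp
  qed
  show ?thesis using Zp0 PQe pt by blast
qed

primrec gN :: "(complex \<Rightarrow> complex^'n^'n) \<Rightarrow> (complex \<Rightarrow> complex^'n^'n) \<Rightarrow> complex^'n^'n \<Rightarrow> nat \<Rightarrow> nat \<Rightarrow> complex \<Rightarrow> complex^'n^'n" where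
  "gN Fv ai A0 p 0 = Fv"
| "gN Fv ai A0 p (Suc N) = (\<lambda>z. ai z ** gN Fv ai A0 p N (z^p) ** A0)"

lemma merom_core:
  fixes Fv a :: "complex \<Rightarrow> complex^'n^'n" and A0 :: "complex^'n^'n" and Zp :: "complex poly"
  assumes p: "p \<ge> 2" and \<rho>: "0 < \<rho>" "\<rho> < 1" and Zp: "Zp \<noteq> 0"
    and Fv_an: "\<And>i j. (\<lambda>z. Fv z $ i $ j) analytic_on ball 0 \<rho>"
    and a_mer: "\<And>i j. (\<lambda>z. a z $ i $ j) meromorphic_on UNIV"
    and a_det: "\<And>z. poly Zp z \<noteq> 0 \<Longrightarrow> det (a z) \<noteq> 0"
    and feq: "\<And>z. norm z < \<rho> \<Longrightarrow> poly Zp z \<noteq> 0 \<Longrightarrow> a z ** Fv z = Fv (z^p) ** A0"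
  shows "\<exists>G :: complex \<Rightarrow> complex^'n^'n. (\<forall>i j. (\<lambda>z. G z $ i $ j) meromorphic_on ball 0 1) \<and>
           eventually (\<lambda>z. G z = Fv z) (at 0)"
proof -
  define ai where "ai z = cinv (a z)" for z
  define g where "g = gN Fv ai A0 p"
  define U where "U N = {z::complex. norm z ^ (p^N) < \<rho>}" for N
  have feq': "Fv z = ai z ** Fv (z^p) ** A0" if "norm z < \<rho>" "poly Zp z \<noteq> 0" for z
  proof -
    have I: "ai z ** a z = mat 1" using cinv[OF a_det[OF that(2)]] unfolding ai_def by blast
    have "Fv z = (ai z ** a z) ** Fv z" by (simp add: I)
    also have "\<dots> = ai z ** (Fv (z^p) ** A0)" by (simp add: matrix_mul_assoc[symmetric] feq[OF that])
    finally show ?thesis by (simp add: matrix_mul_assoc)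
  qed
  have U_open: "open (U N)" for N
    unfolding U_def by (intro open_Collect_less continuous_intros)
  have U_sub: "norm z < 1" if "z \<in> U N" for z N
  proof (rule ccontr)
    assume "\<not> norm z < 1"
    then have "1 \<le> norm z ^ (p^N)" by (simp add: one_le_power)
    then show False using that \<rho> unfolding U_def by simp
  qed
  have U_mono: "U k \<subseteq> U N" if "k \<le> N" for k N
  proof
    fix z assume z: "z \<in> U k"
    have pk: "p^k \<le> p^N" using p that by (intro power_increasing) auto
    have "norm z ^ (p^N) \<le> norm z ^ (p^k)"
      using U_sub[OF z] by (intro power_decreasing[OF pk]) auto
    then show "z \<in> U N" using z unfolding U_def by simp
  qed
  have U_pow: "z^p \<in> U N \<longleftrightarrow> z \<in> U (Suc N)" for z N
    unfolding U_def by (simp add: norm_power power_mult[symmetric] mult.commute)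
  have U_cover: "\<exists>N. z \<in> U N" if z1: "norm z < 1" for z
  proof -
    obtain N where N: "norm z ^ N < \<rho>" using real_arch_pow_inv[OF \<rho>(1) z1] by blast
    have "N \<le> 2^N" using less_exp[of N] by simp
    also have "\<dots> \<le> p^N" using p by (intro power_mono) auto
    finally have pN: "N \<le> p^N" .
    have "norm z ^ (p^N) \<le> norm z ^ N"
      using z1 by (intro power_decreasing[OF pN]) auto
    then show ?thesis using N unfolding U_def by (intro exI[of _ N]) simp
  qed
  have U0: "U 0 = ball 0 \<rho>" unfolding U_def by auto
  have ai_mer: "(\<lambda>z. ai z $ i $ j) meromorphic_on S" for i j S
    unfolding ai_def by (rule meromorphic_on_subset[OF merom_cinv[OF a_mer]]) auto
  have mer: "(\<lambda>z. g N z $ i $ j) meromorphic_on U N" for N i j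
  proof (induction N arbitrary: i j)
    case 0
    show ?case unfolding g_def U0 using Fv_an by (simp add: analytic_on_imp_meromorphic_on)
  next
    case (Suc N)
    have c: "(\<lambda>z. g N (z^p) $ k $ l) meromorphic_on U (Suc N)" for k l
    proof (rule meromorphic_on_compose[OF Suc.IH[of k l]])
      show "(\<lambda>z. z^p) analytic_on U (Suc N)" by (intro analytic_intros)
      show "(\<lambda>z. z^p) ` U (Suc N) \<subseteq> U N"
      proof (rule image_subsetI)
        fix z assume "z \<in> U (Suc N)"
        then show "z^p \<in> U N" using U_pow[of z N] by blast
      qed
    qed
    have gS: "g (Suc N) z = ai z ** g N (z^p) ** A0" for z by (simp add: g_def)
    show ?case unfolding gS matrix_matrix_mult_def vec_lambda_beta
      by (intro meromorphic_intros ai_mer c)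
  qed
  define good where "good k z = (\<forall>j\<in>{..k}. poly Zp (z^(p^j)) \<noteq> 0)" for k z
  have cons: "g (Suc k) z = g k z" if "z \<in> U k" "good k z" for k z
    using that
  proof (induction k arbitrary: z)
    case 0
    then have "norm z < \<rho>" "poly Zp z \<noteq> 0" by (auto simp: U_def good_def)
    then show ?case by (simp add: g_def feq'[symmetric])
  next
    case (Suc k)
    have zp: "z^p \<in> U k" using Suc.prems U_pow by blast
    have gd: "good k (z^p)" unfolding good_def
    proof
      fix j assume j: "j \<in> {..k}"
      have e: "(z^p)^(p^j) = z^(p^(Suc j))" by (simp only: power_mult[symmetric] power_Suc)
      have "Suc j \<in> {..Suc k}" using j by simp
      then show "poly Zp ((z^p)^(p^j)) \<noteq> 0" using Suc.prems(2) unfolding good_def e by blast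
    qed
    have "g (Suc k) (z^p) = g k (z^p)" by (rule Suc.IH[OF zp gd])
    then show ?case by (simp add: g_def)
  qed
  have ev_good: "eventually (\<lambda>z. good k z) (at z0)" for k z0
    unfolding good_def
  proof (intro eventually_ball_finite ballI)
    fix j assume "j \<in> {..k}"
    define q where "q = pcompose Zp (monom 1 (p^j))"
    have pq: "poly q z = poly Zp (z^(p^j))" for z by (simp add: q_def poly_pcompose poly_monom)
    have "degree (monom (1::complex) (p^j)) > 0" using p by (simp add: degree_monom_eq)
    then have q0: "q \<noteq> 0" using pcompose_eq_0[of Zp "monom 1 (p^j)"] Zp unfolding q_def by auto
    have "\<not> z0 islimpt {z. poly q z = 0}" by (rule islimpt_finite[OF poly_roots_finite[OF q0]])
    then have "eventually (\<lambda>z. z \<notin> {z. poly q z = 0}) (at z0)" by (simp add: islimpt_iff_eventually)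
    then show "eventually (\<lambda>z. poly Zp (z^(p^j)) \<noteq> 0) (at z0)" by (simp add: pq)
  qed simp
  define Nz where "Nz z = (LEAST N. z \<in> U N)" for z
  define G where "G z = g (Nz z) z" for z
  have loc: "eventually (\<lambda>z. G z = g N z) (at z0)" if z0: "z0 \<in> U N" for z0 N
  proof -
    have "eventually (\<lambda>z. z \<in> U N \<and> good N z) (at z0)"
      using eventually_at_in_open'[OF U_open z0] ev_good by (rule eventually_conj)
    then show ?thesis
    proof (rule eventually_mono)
      fix z assume z: "z \<in> U N \<and> good N z"
      have le: "Nz z \<le> N" unfolding Nz_def using z by (intro Least_le) blast
      have zN: "z \<in> U (Nz z)" unfolding Nz_def using z by (intro LeastI) blast
      have "Nz z + d \<le> N \<longrightarrow> g (Nz z + d) z = g (Nz z) z" for d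
      proof (induction d)
        case (Suc d)
        show ?case
        proof
          assume d: "Nz z + Suc d \<le> N"
          have zU: "z \<in> U (Nz z + d)" using U_mono[of "Nz z" "Nz z + d"] zN by auto
          have gd: "good (Nz z + d) z" using z d unfolding good_def by auto
          have "g (Suc (Nz z + d)) z = g (Nz z + d) z" by (rule cons[OF zU gd])
          then show "g (Nz z + Suc d) z = g (Nz z) z" using Suc d by simp
        qed
      qed simp
      from this[of "N - Nz z"] le show "G z = g N z" by (simp add: G_def)
    qed
  qed
  have "(\<lambda>z. G z $ i $ j) meromorphic_on ball 0 1" for i j
  proof (subst meromorphic_on_meromorphic_at, intro ballI)
    fix z0 :: complex assume "z0 \<in> ball 0 1"
    then obtain N where N: "z0 \<in> U N" using U_cover by auto
    have "(\<lambda>z. g N z $ i $ j) meromorphic_on {z0}"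
      by (rule meromorphic_on_subset[OF mer]) (use N in auto)
    moreover have "eventually (\<lambda>z. g N z $ i $ j = G z $ i $ j) (at z0)"
      using loc[OF N] by (rule eventually_mono) simp
    ultimately show "(\<lambda>z. G z $ i $ j) meromorphic_on {z0}"
      using meromorphic_on_cong[of "{z0}" "\<lambda>z. g N z $ i $ j" "\<lambda>z. G z $ i $ j" "{z0}"] by blast
  qed
  moreover have "eventually (\<lambda>z. G z = Fv z) (at 0)"
    using loc[of 0 0] \<rho> by (simp add: U0 g_def)
  ultimately show ?thesis by blast
qed



lemma poly_meromorphic: "(\<lambda>z. poly q z) meromorphic_on S"
proof -
  have "(\<lambda>z. poly q z) holomorphic_on UNIV" by (intro holomorphic_intros)
  then have "(\<lambda>z. poly q z) analytic_on UNIV" by (simp add: analytic_on_open)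
  then show ?thesis by (rule meromorphic_on_subset[OF analytic_on_imp_meromorphic_on]) auto
qed

lemma radius_le:
  assumes "K \<ge> 1" "K \<le> K'" "fps_conv_radius f \<ge> ereal (1/(2*K))"
  shows "fps_conv_radius f \<ge> ereal (1/(2*K'))"
proof -
  have "1/(2*K') \<le> 1/(2*K)" using assms by (intro divide_left_mono) auto
  then show ?thesis using assms(3) by (meson ereal_less_eq(3) order.trans)
qed

lemma merom_part:
  fixes A F :: "complex fps^'n^'n"
  assumes p: "p \<ge> 2" and invA: "invertible A" and inv0: "invertible (mat_at0 A)"
    and bA: "mbounded A" and bF: "mbounded F" and F0: "mat_at0 F = mat 1"
    and eq: "A ** F = mahler_mat p F ** const_mat (mat_at0 A)"
    and rat: "\<forall>i j. rational_fps (A $ i $ j)"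
  shows "\<exists>g :: 'n \<Rightarrow> 'n \<Rightarrow> complex \<Rightarrow> complex.
                (\<forall>i j. g i j meromorphic_on ball 0 1 \<and>
                   (\<forall>\<^sub>F z in at 0. g i j z = eval_fps (F $ i $ j) z)) \<and>
                \<not> (\<forall>\<^sub>F z in at 0. det (\<chi> i j. g i j z) = 0)"
proof -
  have p0: "p > 0" using p by simp
  obtain P Q Zp where Zp0: "Zp \<noteq> 0" and PQ: "\<And>i j. A$i$j * fps_of_poly (Q i j) = fps_of_poly (P i j)"
    and Zpz: "\<And>z. poly Zp z \<noteq> 0 \<Longrightarrow> (\<forall>i j. poly (Q i j) z \<noteq> 0) \<and>
          det (\<chi> i j. poly (P i j) z / poly (Q i j) z) \<noteq> 0"
    using rat_data[OF invA rat] by blast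
  have bM: "mbounded (mahler_mat p F)" by (rule mbounded_mahler[OF p0 bF])
  obtain B1 K1 where K1: "K1 \<ge> 1" "\<And>m. mnorm (cm A m) \<le> B1 * K1^m" using bA mbounded_def by blast
  obtain B2 K2 where K2: "K2 \<ge> 1" "\<And>m. mnorm (cm F m) \<le> B2 * K2^m" using bF mbounded_def by blast
  obtain B3 K3 where K3: "K3 \<ge> 1" "\<And>m. mnorm (cm (mahler_mat p F) m) \<le> B3 * K3^m"
    using bM mbounded_def by blast
  define K where "K = max (max K1 K2) K3"
  define \<rho> where "\<rho> = 1/(2*K)"
  have K: "K \<ge> 1" using K1 unfolding K_def by simp
  have \<rho>: "0 < \<rho>" "\<rho> < 1" using K unfolding \<rho>_def by auto
  have rA: "fps_conv_radius (A$i$j) \<ge> ereal \<rho>" for i j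
    unfolding \<rho>_def by (rule radius_le[OF K1(1) _ mbounded_radius[OF K1]]) (simp add: K_def)
  have rF: "fps_conv_radius (F$i$j) \<ge> ereal \<rho>" for i j
    unfolding \<rho>_def by (rule radius_le[OF K2(1) _ mbounded_radius[OF K2]]) (simp add: K_def)
  have rM: "fps_conv_radius (mahler_mat p F$i$j) \<ge> ereal \<rho>" for i j
    unfolding \<rho>_def by (rule radius_le[OF K3(1) _ mbounded_radius[OF K3]]) (simp add: K_def)
  have lt: "ereal (norm z) < r" if "norm z < \<rho>" "r \<ge> ereal \<rho>" for z :: complex and r
  proof -
    have "ereal (norm z) < ereal \<rho>" using that(1) by simp
    then show ?thesis using that(2) by (rule order.strict_trans2)
  qed
  define Fv where "Fv z = (\<chi> i j. eval_fps (F$i$j) z)" for z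
  define a where "a z = (\<chi> i j. poly (P i j) z / poly (Q i j) z)" for z :: complex
  define A0 where "A0 = mat_at0 A"
  have Fv_an: "(\<lambda>z. Fv z $ i $ j) analytic_on ball 0 \<rho>" for i j
  proof -
    have "(\<lambda>z. eval_fps (F$i$j) z) analytic_on ball 0 \<rho>"
    proof (rule analytic_on_eval_fps)
      show "(\<lambda>w. w) analytic_on ball 0 \<rho>" by (intro analytic_intros)
      fix z :: complex assume "z \<in> ball 0 \<rho>"
      then have "norm z < \<rho>" by simp
      then show "ereal (norm z) < fps_conv_radius (F$i$j)" using lt[OF _ rF] by simp
    qed
    then show ?thesis unfolding Fv_def by simp
  qed
  have a_mer: "(\<lambda>z. a z $ i $ j) meromorphic_on UNIV" for i j
    unfolding a_def by (simp add: meromorphic_on_divide poly_meromorphic)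
  have a_det: "det (a z) \<noteq> 0" if "poly Zp z \<noteq> 0" for z
    using Zpz[OF that] unfolding a_def by blast
  have feq: "a z ** Fv z = Fv (z^p) ** A0" if z: "norm z < \<rho>" "poly Zp z \<noteq> 0" for z
  proof -
    have z1: "norm z < 1" using z \<rho> by simp
    have zp: "norm (z^p) < \<rho>"
    proof -
      have "norm (z^p) = norm z ^ p" by (simp add: norm_power)
      also have "\<dots> \<le> norm z ^ 1" using z1 p by (intro power_decreasing) auto
      finally show ?thesis using z by simp
    qed
    have evA: "eval_fps (A$i$k) z = a z $ i $ k" for i k
    proof -
      have "eval_fps (A$i$k * fps_of_poly (Q i k)) z = eval_fps (A$i$k) z * poly (Q i k) z"
        using eval_fps_mult[of z "A$i$k" "fps_of_poly (Q i k)"] lt[OF z(1) rA] by simp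
      then have "eval_fps (A$i$k) z * poly (Q i k) z = poly (P i k) z" by (simp add: PQ)
      then show ?thesis using Zpz[OF z(2)] unfolding a_def by (simp add: field_simps)
    qed
    have "(a z ** Fv z) $ i $ j = (Fv (z^p) ** A0) $ i $ j" for i j
    proof -
      have "eval_fps ((A ** F)$i$j) z = (\<Sum>k\<in>UNIV. eval_fps (A$i$k * F$k$j) z)"
        unfolding matrix_matrix_mult_def vec_lambda_beta
        by (rule conjunct1[OF eval_fps_sum']) (use eval_fps_mult' lt[OF z(1)] rA rF in auto)
      also have "\<dots> = (\<Sum>k\<in>UNIV. a z $ i $ k * Fv z $ k $ j)"
        using eval_fps_mult' lt[OF z(1)] rA rF by (simp add: evA Fv_def)
      finally have L: "eval_fps ((A ** F)$i$j) z = (a z ** Fv z) $ i $ j"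
        by (simp add: matrix_matrix_mult_def)
      have "eval_fps ((mahler_mat p F ** const_mat A0)$i$j) z =
          (\<Sum>k\<in>UNIV. eval_fps (mahler_mat p F $ i $ k * fps_const (A0$k$j)) z)"
        unfolding matrix_matrix_mult_def vec_lambda_beta const_mat_def
        by (rule conjunct1[OF eval_fps_sum']) (use eval_fps_mult' lt[OF z(1)] rM in auto)
      also have "\<dots> = (\<Sum>k\<in>UNIV. eval_fps (mahler_mat p F $ i $ k) z * A0$k$j)"
        using eval_fps_mult' lt[OF z(1)] rM by simp
      also have "\<dots> = (\<Sum>k\<in>UNIV. Fv (z^p) $ i $ k * A0$k$j)"
      proof (rule sum.cong[OF refl])
        fix k
        have "eval_fps (mahler_mat p F $ i $ k) z = eval_fps (F$i$k) (z^p)"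
          unfolding mahler_mat_def mahler_fps_def vec_lambda_beta
          by (rule eval_mahler[OF p0 lt[OF zp rF]])
        then show "eval_fps (mahler_mat p F $ i $ k) z * A0$k$j = Fv (z^p) $ i $ k * A0$k$j"
          by (simp add: Fv_def)
      qed
      finally have R: "eval_fps ((mahler_mat p F ** const_mat A0)$i$j) z = (Fv (z^p) ** A0) $ i $ j"
        by (simp add: matrix_matrix_mult_def)
      show ?thesis using L R eq unfolding A0_def by simp
    qed
    then show ?thesis by (simp add: vec_eq_iff)
  qed
  obtain G :: "complex \<Rightarrow> complex^'n^'n" where Gm: "\<And>i j. (\<lambda>z. G z $ i $ j) meromorphic_on ball 0 1"
    and GF: "eventually (\<lambda>z. G z = Fv z) (at 0)"
    using merom_core[OF p \<rho> Zp0 Fv_an a_mer a_det feq] by blast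
  define g where "g i j z = G z $ i $ j" for i j z
  have ev: "\<forall>\<^sub>F z in at 0. g i j z = eval_fps (F $ i $ j) z" for i j
    using GF by (rule eventually_mono) (simp add: g_def Fv_def)
  have cont: "isCont (\<lambda>z. det (Fv z)) 0"
  proof -
    have r0: "norm (0::complex) < fps_conv_radius (F$i$j)" for i j
    proof -
      have "norm (0::complex) < \<rho>" using \<rho> by simp
      from lt[OF this rF[of i j]] show ?thesis .
    qed
    show ?thesis unfolding Fv_def det_def vec_lambda_beta
      by (intro continuous_intros r0)
  qed
  have Fv0: "Fv 0 = mat 1" using F0 unfolding Fv_def mat_at0_def by (simp add: eval_fps_at_0 vec_eq_iff)
  have "((\<lambda>z. det (Fv z)) \<longlongrightarrow> 1) (at 0)"
    using cont Fv0 by (simp add: isCont_def)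
  then have ne: "eventually (\<lambda>z. det (Fv z) \<noteq> 0) (at 0)"
    by (rule tendsto_imp_eventually_ne) simp
  have gdet: "(\<chi> i j. g i j z) = G z" for z by (simp add: g_def vec_eq_iff)
  have ndet: "\<not> (\<forall>\<^sub>F z in at 0. det (\<chi> i j. g i j z) = 0)"
  proof
    assume H: "\<forall>\<^sub>F z in at 0. det (\<chi> i j. g i j z) = 0"
    have "eventually (\<lambda>z. False) (at (0::complex))"
      using eventually_conj[OF ne eventually_conj[OF GF H]] by (rule eventually_mono) (auto simp: gdet)
    then show False by (simp add: eventually_False)
  qed
  have gm: "g i j meromorphic_on ball 0 1" for i j
  proof -
    have "g i j = (\<lambda>z. G z $ i $ j)" by (rule ext) (simp add: g_def)
    then show ?thesis using Gm by simp
  qed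
  show ?thesis using gm ev ndet by blast
qed



theorem mainTheorem2:
  fixes p :: nat and A :: "complex fps ^'n^'n"
  assumes "p \<ge> 2"
    and "\<forall>i j. convergent_fps (A $ i $ j)"
    and "invertible A"
    and "invertible (mat_at0 A)"
  shows "(\<exists>!F :: complex fps ^'n^'n. invertible F \<and> mat_at0 F = mat 1 \<and>
            matrix_inv (mahler_mat p F) ** A ** F = const_mat (mat_at0 A)) \<and>
         (\<forall>F :: complex fps ^'n^'n. invertible F \<and> mat_at0 F = mat 1 \<and>
            matrix_inv (mahler_mat p F) ** A ** F = const_mat (mat_at0 A) \<longrightarrow>
          (\<forall>i j. convergent_fps (F $ i $ j)) \<and>
          (\<exists>G :: complex fps ^'n^'n. (\<forall>i j. convergent_fps (G $ i $ j)) \<and>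
              F ** G = mat 1 \<and> G ** F = mat 1) \<and>
          ((\<forall>i j. rational_fps (A $ i $ j)) \<longrightarrow>
             (\<exists>g :: 'n \<Rightarrow> 'n \<Rightarrow> complex \<Rightarrow> complex.
                (\<forall>i j. g i j meromorphic_on ball 0 1 \<and>
                   (\<forall>\<^sub>F z in at 0. g i j z = eval_fps (F $ i $ j) z)) \<and>
                \<not> (\<forall>\<^sub>F z in at 0. det (\<chi> i j. g i j z) = 0))))"
proof -
  note p = assms(1)
  have p0: "p > 0" using p by simp
  define F0 where "F0 = mk (solc p (cm A))"
  have char: "(invertible F \<and> mat_at0 F = mat 1 \<and>
            matrix_inv (mahler_mat p F) ** A ** F = const_mat (mat_at0 A)) \<longleftrightarrow> F = F0" for F
  proof
    assume H: "invertible F \<and> mat_at0 F = mat 1 \<and>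
            matrix_inv (mahler_mat p F) ** A ** F = const_mat (mat_at0 A)"
    then have "A ** F = mahler_mat p F ** const_mat (mat_at0 A)"
      using eq_equiv[OF p0] by blast
    then show "F = F0" using sol_char[OF p assms(4)] H unfolding F0_def by blast
  next
    assume "F = F0"
    then have H: "mat_at0 F = mat 1 \<and> A ** F = mahler_mat p F ** const_mat (mat_at0 A)"
      using sol_char[OF p assms(4)] unfolding F0_def by blast
    then have "invertible F" using invertible_at0 by blast
    with H show "invertible F \<and> mat_at0 F = mat 1 \<and>
            matrix_inv (mahler_mat p F) ** A ** F = const_mat (mat_at0 A)"
      using eq_equiv[OF p0] by blast
  qed
  have F0props: "mat_at0 F0 = mat 1 \<and> A ** F0 = mahler_mat p F0 ** const_mat (mat_at0 A)"
    using sol_char[OF p assms(4)] unfolding F0_def by blast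
  obtain M r where Mr: "r \<ge> 1" "\<And>k. mnorm (cm A k) \<le> M * r^k"
    using mat_bound[OF assms(2)] by blast
  obtain B K where BK: "K \<ge> 1" "\<And>m. mnorm (cm F0 m) \<le> B * K^m"
    using solc_bound[OF p Mr] unfolding F0_def cm_mk by blast
  have bF0: "mbounded F0" using BK unfolding mbounded_def by blast
  define G where "G = mk (rinv_c (cm F0))"
  have FG: "F0 ** G = mat 1 \<and> G ** F0 = mat 1"
    using invertible_at0[of F0] F0props unfolding G_def by blast
  have bG: "mbounded G"
    using rinv_bound[OF BK] unfolding G_def mbounded_def cm_mk by blast
  have part3: "(\<forall>i j. rational_fps (A $ i $ j)) \<longrightarrow>
             (\<exists>g :: 'n \<Rightarrow> 'n \<Rightarrow> complex \<Rightarrow> complex.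
                (\<forall>i j. g i j meromorphic_on ball 0 1 \<and>
                   (\<forall>\<^sub>F z in at 0. g i j z = eval_fps (F0 $ i $ j) z)) \<and>
                \<not> (\<forall>\<^sub>F z in at 0. det (\<chi> i j. g i j z) = 0))"
    using merom_part[OF p assms(3,4) convergent_mbounded[OF assms(2)] bF0] F0props by blast
  have U: "\<exists>!F. invertible F \<and> mat_at0 F = mat 1 \<and>
            matrix_inv (mahler_mat p F) ** A ** F = const_mat (mat_at0 A)"
    by (rule ex1I[where a=F0]) (simp_all add: char)
  have conv: "\<forall>i j. convergent_fps (F0 $ i $ j)" using mbounded_convergent[OF bF0] by blast
  have convG: "\<exists>G. (\<forall>i j. convergent_fps (G $ i $ j)) \<and> F0 ** G = mat 1 \<and> G ** F0 = mat 1"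
    using mbounded_convergent[OF bG] FG by blast
  show ?thesis
  proof (rule conjI[OF U], intro allI impI)
    fix F assume "invertible F \<and> mat_at0 F = mat 1 \<and>
            matrix_inv (mahler_mat p F) ** A ** F = const_mat (mat_at0 A)"
    then have F: "F = F0" using char by blast
    show "(\<forall>i j. convergent_fps (F $ i $ j)) \<and>
          (\<exists>G :: complex fps ^'n^'n. (\<forall>i j. convergent_fps (G $ i $ j)) \<and>
              F ** G = mat 1 \<and> G ** F = mat 1) \<and>
          ((\<forall>i j. rational_fps (A $ i $ j)) \<longrightarrow>
             (\<exists>g :: 'n \<Rightarrow> 'n \<Rightarrow> complex \<Rightarrow> complex.
                (\<forall>i j. g i j meromorphic_on ball 0 1 \<and>
                   (\<forall>\<^sub>F z in at 0. g i j z = eval_fps (F $ i $ j) z)) \<and>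
                \<not> (\<forall>\<^sub>F z in at 0. det (\<chi> i j. g i j z) = 0)))"
      unfolding F using conv convG part3 by (intro conjI)
  qed
qed

end
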